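(* Let $w$ be analytic on the open unit disk $D=\{|z|<1\}$ and suppose $w$ has a soft singularity at a point $z_1$ with $|z_1|=1$. Then the angular primitive $w^{-1\cdot}(z)=-i\int_0^z\frac{w(z')-w(0)}{z'}\,dz'$ also has a soft singularity at $z_1$; in particular $w^{-1\cdot}(z_1)=-i\int_0^{z_1}\frac{w(z)-w(0)}{z}\,dz$, taken along a simple curve in $D$ ending at $z_1$, exists and is finite.
   Context: An inner analytic function is one analytic on the open unit disk centered at the origin. Its angular primitive is $w^{-1\cdot}(z)=-i\int_0^z\frac{w(z')-w(0)}{z'}dz'$ (integral along any curve in the disk, integrand extended at $0$ by $w'(0)$). A singular point of $w$ on the unit circle is a point where $w$ fails to be analytic; a singularity at $z_1$ on the unit circle is soft if $\lim_{z\to z_1}w(z)$ (from within the open disk) exists and is finite, and hard otherwise. *)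

theory Defs
  imports "HOL-Complex_Analysis.Complex_Analysis"
begin

definition ang_integrand :: "(complex \<Rightarrow> complex) \<Rightarrow> complex \<Rightarrow> complex" where
  "ang_integrand w u = (if u = 0 then deriv w 0 else (w u - w 0) / u)"

text \<open>Angular primitive, integrating along the segment from 0 to z
  (path-independent in the unit disk).\<close>
definition angular_primitive :: "(complex \<Rightarrow> complex) \<Rightarrow> complex \<Rightarrow> complex" where
  "angular_primitive w z = - \<i> * contour_integral (linepath 0 z) (ang_integrand w)"

definition analytic_at_boundary :: "(complex \<Rightarrow> complex) \<Rightarrow> complex \<Rightarrow> bool" where
  "analytic_at_boundary w z1 \<longleftrightarrow>
     (\<exists>g r. r > 0 \<and> g holomorphic_on ball z1 r \<and> (\<forall>z \<in> ball z1 r \<inter> ball 0 1. g z = w z))"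

definition singular_point :: "(complex \<Rightarrow> complex) \<Rightarrow> complex \<Rightarrow> bool" where
  "singular_point w z1 \<longleftrightarrow> \<not> analytic_at_boundary w z1"

definition soft_singularity :: "(complex \<Rightarrow> complex) \<Rightarrow> complex \<Rightarrow> bool" where
  "soft_singularity w z1 \<longleftrightarrow>
     singular_point w z1 \<and> (\<exists>L. (w \<longlongrightarrow> L) (at z1 within ball 0 1))"

end

theory Submission
  imports Defs
begin

lemma prim_lemma:
  fixes G f :: "complex \<Rightarrow> complex" and \<gamma> :: "real \<Rightarrow> complex"
  assumes G: "\<And>x. x \<in> D \<Longrightarrow> (G has_field_derivative f x) (at x)"
    and vp: "valid_path \<gamma>" and inD: "\<And>t. t \<in> {0<..<1} \<Longrightarrow> \<gamma> t \<in> D"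
    and cont: "continuous_on (path_image \<gamma>) G"
  shows "(f has_contour_integral (G (pathfinish \<gamma>) - G (pathstart \<gamma>))) \<gamma>"
proof -
  obtain K where "finite K" and K: "\<forall>x\<in>{0..1} - K. \<gamma> differentiable (at x within {0..1})"
    and cg: "continuous_on {0..1} \<gamma>"
    using piecewise_C1_imp_differentiable[OF vp[unfolded valid_path_def]]
    by (auto simp: piecewise_differentiable_on_def)
  have cfg: "continuous_on {0..1} (\<lambda>x. G (\<gamma> x))"
    using continuous_on_compose[OF cg, of G] cont by (simp add: path_image_def o_def)
  have der: "((\<lambda>x. G (\<gamma> x)) has_vector_derivative f (\<gamma> x) * vector_derivative \<gamma> (at x within {0..1})) (at x)"
    if x: "x \<in> {0<..<1} - K" for x
  proof -
    have ax: "at x within {0..1} = at x" using x at_within_Icc_at[of 0 x 1] by auto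
    note ax[simp]
    have "x \<in> {0..1} - K" using x by auto
    then have "\<gamma> differentiable at x" using K by (metis ax)
    then have "(\<gamma> has_vector_derivative vector_derivative \<gamma> (at x)) (at x)"
      by (simp add: vector_derivative_works)
    then have gdiff: "(\<gamma> has_derivative (\<lambda>u. u * vector_derivative \<gamma> (at x))) (at x)"
      by (simp add: has_vector_derivative_def scaleR_conv_of_real)
    have "(G has_derivative (*) (f (\<gamma> x))) (at (\<gamma> x))"
      using G inD x by (simp add: has_field_derivative_def)
    then have "((\<lambda>x. G (\<gamma> x)) has_derivative (\<lambda>u. f (\<gamma> x) * (u * vector_derivative \<gamma> (at x)))) (at x)"
      using diff_chain_at[OF gdiff] by (simp add: o_def)
    then show ?thesis by (simp add: has_vector_derivative_def scaleR_conv_of_real mult_ac)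
  qed
  have "((\<lambda>x. f (\<gamma> x) * vector_derivative \<gamma> (at x within {0..1})) has_integral (G (\<gamma> 1) - G (\<gamma> 0))) {0..1}"
    by (rule fundamental_theorem_of_calculus_interior_strong[OF \<open>finite K\<close>]) (use der cfg in auto)
  then show ?thesis by (simp add: has_contour_integral_def pathfinish_def pathstart_def)
qed

theorem mainTheorem8:
  fixes w :: "complex \<Rightarrow> complex" and z1 :: complex
  assumes "w holomorphic_on ball 0 1"
    and "norm z1 = 1"
    and "soft_singularity w z1"
  shows "soft_singularity (angular_primitive w) z1 \<and>
    (\<exists>L. (angular_primitive w \<longlongrightarrow> L) (at z1 within ball 0 1) \<and>
       (\<forall>\<gamma>. valid_path \<gamma> \<and> arc \<gamma> \<and> pathstart \<gamma> = 0 \<and> pathfinish \<gamma> = z1 \<and>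
             path_image \<gamma> - {z1} \<subseteq> ball 0 1
          \<longrightarrow> (ang_integrand w has_contour_integral (\<i> * L)) \<gamma>))"
proof -
  define f where "f = ang_integrand w"
  define D where "D = ball (0::complex) 1"
  have oD: "open D" and cD: "convex D" by (auto simp: D_def)
  have wh: "w holomorphic_on D" using assms(1) by (simp add: D_def)
  obtain Lw where Lw: "(w \<longlongrightarrow> Lw) (at z1 within D)" and sing: "\<not> analytic_at_boundary w z1"
    using assms(3) by (auto simp: soft_singularity_def singular_point_def D_def)
  have z1D: "z1 \<notin> D" using assms(2) by (simp add: D_def)
  have D0: "0 \<in> D" by (simp add: D_def)
  have fh1: "f holomorphic_on D - {0}"
  proof -
    have "(\<lambda>z. (w z - w 0) / z) holomorphic_on D - {0}"
      by (intro holomorphic_intros holomorphic_on_subset[OF wh]) auto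
    then show ?thesis
      by (rule holomorphic_transform) (auto simp: f_def ang_integrand_def)
  qed
  have "(w has_field_derivative deriv w 0) (at 0)"
    using wh oD D0 by (meson holomorphic_derivI)
  then have "((\<lambda>y. (w y - w 0) / (y - 0)) \<longlongrightarrow> deriv w 0) (at 0)"
    by (simp add: has_field_derivative_iff)
  moreover have "\<forall>\<^sub>F y in at 0. (w y - w 0) / (y - 0) = f y"
    by (auto simp: f_def ang_integrand_def eventually_at_filter)
  ultimately have "(f \<longlongrightarrow> deriv w 0) (at 0)"
    by (rule Lim_transform_eventually)
  then have "(f \<longlongrightarrow> f 0) (at 0)" by (simp add: f_def ang_integrand_def)
  then have "(f \<longlongrightarrow> f 0) (at 0 within D)"
    by (rule tendsto_mono[rotated]) (rule at_le, simp)
  then have fh: "f holomorphic_on D"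
    using no_isolated_singularity'[of "{0}" f D] fh1 oD by auto
  obtain g where g0: "\<And>x. x \<in> D \<Longrightarrow> (g has_field_derivative f x) (at x within D)"
    using holomorphic_convex_primitive'[OF cD oD fh] by blast
  have g: "(g has_field_derivative f x) (at x)" if x: "x \<in> D" for x
    using g0[OF x] at_within_open[OF x oD] by simp
  have AP: "angular_primitive w z = - \<i> * (g z - g 0)" if z: "z \<in> D" for z
  proof -
    have "closed_segment 0 z \<subseteq> D" using cD D0 z by (simp add: closed_segment_subset)
    then have "(f has_contour_integral (g z - g 0)) (linepath 0 z)"
      using contour_integral_primitive[OF g0, of "linepath 0 z"] by simp
    then show ?thesis
      by (simp add: angular_primitive_def f_def[symmetric] contour_integral_unique)
  qed
  have "\<forall>\<^sub>F z in at z1 within D. dist (w z) Lw < 1" using tendstoD[OF Lw] by simp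
  then obtain d where d: "d > 0" "\<And>x. x \<in> D \<Longrightarrow> 0 < dist x z1 \<Longrightarrow> dist x z1 < d \<Longrightarrow> dist (w x) Lw < 1"
    by (auto simp: eventually_at)
  define \<delta> where "\<delta> = min d (1/2)"
  have \<delta>: "\<delta> > 0" using d by (simp add: \<delta>_def)
  define S where "S = ball z1 \<delta> \<inter> D"
  define B where "B = 2 * (norm Lw + 1 + norm (w 0))"
  have fB: "norm (f z) \<le> B" if z: "z \<in> S" for z
  proof -
    have zD: "z \<in> D" and dz: "dist z1 z < \<delta>" using z by (auto simp: S_def)
    have "z \<noteq> z1" using zD z1D by auto
    then have "dist (w z) Lw < 1" using d(2)[OF zD] dz by (auto simp: \<delta>_def dist_commute)
    then have wz: "norm (w z) \<le> norm Lw + 1"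
      using norm_triangle_sub[of "w z" Lw] by (simp add: dist_norm)
    have nz: "norm z \<ge> 1/2"
    proof -
      have "norm z1 \<le> norm z + norm (z1 - z)" by (rule norm_triangle_sub)
      moreover have "norm (z1 - z) < 1/2" using dz by (simp add: \<delta>_def dist_norm)
      ultimately show ?thesis using assms(2) by linarith
    qed
    then have z0: "z \<noteq> 0" by auto
    have "norm (f z) = norm (w z - w 0) / norm z"
      using z0 by (simp add: f_def ang_integrand_def norm_divide)
    also have "\<dots> \<le> (norm Lw + 1 + norm (w 0)) / (1/2)"
    proof (rule frac_le)
      show "norm (w z - w 0) \<le> norm Lw + 1 + norm (w 0)"
        using wz norm_triangle_ineq4[of "w z" "w 0"] by linarith
    qed (use nz in auto)
    finally show ?thesis by (simp add: B_def)
  qed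
  have cS: "convex S" by (simp add: S_def D_def convex_Int)
  have lip: "norm (g x - g y) \<le> B * norm (x - y)" if "x \<in> S" "y \<in> S" for x y
    by (rule field_differentiable_bound[OF cS _ fB that])
       (auto simp: S_def intro: has_field_derivative_at_within g)
  have B0: "B \<ge> 0" by (simp add: B_def)
  have "lipschitz_on B S g"
    using lip B0 by (intro lipschitz_onI) (auto simp: dist_norm)
  then have uc: "uniformly_continuous_on S g" by (rule lipschitz_on_uniformly_continuous)
  have "z1 \<in> ball z1 \<delta> \<inter> closure D" using \<delta> assms(2) by (simp add: D_def)
  then have "z1 \<in> closure S" using open_Int_closure_subset[of "ball z1 \<delta>" D] by (auto simp: S_def)
  then obtain lg where lgS: "(g \<longlongrightarrow> lg) (at z1 within S)"
    using uniformly_continuous_on_extension_at_closure[OF uc] by blast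
  have "at z1 within S = at z1 within D"
    by (rule at_within_nhd[of z1 "ball z1 \<delta>"]) (use \<delta> in \<open>auto simp: S_def\<close>)
  with lgS have lg: "(g \<longlongrightarrow> lg) (at z1 within D)" by simp
  define L where "L = - \<i> * (lg - g 0)"
  have "((\<lambda>z. - \<i> * (g z - g 0)) \<longlongrightarrow> L) (at z1 within D)"
    unfolding L_def by (intro tendsto_intros lg)
  then have APL: "(angular_primitive w \<longlongrightarrow> L) (at z1 within D)"
    by (rule Lim_transform_eventually) (auto simp: eventually_at_filter AP)
  have nab: "\<not> analytic_at_boundary (angular_primitive w) z1"
  proof
    assume "analytic_at_boundary (angular_primitive w) z1"
    then obtain h r where r: "r > 0" and hh: "h holomorphic_on ball z1 r"
      and hA: "\<forall>z \<in> ball z1 r \<inter> ball 0 1. h z = angular_primitive w z"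
      by (auto simp: analytic_at_boundary_def)
    have "analytic_at_boundary w z1"
      unfolding analytic_at_boundary_def
    proof (intro exI conjI ballI)
      show "r > 0" by fact
      show "(\<lambda>z. w 0 + \<i> * z * deriv h z) holomorphic_on ball z1 r"
        by (intro holomorphic_intros holomorphic_deriv hh) auto
      fix z assume z: "z \<in> ball z1 r \<inter> ball 0 1"
      define U where "U = ball z1 r \<inter> D"
      have oU: "open U" and zU: "z \<in> U" using z by (auto simp: U_def D_def)
      have dz: "(g has_field_derivative f z) (at z)" using g zU by (simp add: U_def)
      have "((\<lambda>z. - \<i> * (g z - g 0)) has_field_derivative - \<i> * (f z - 0)) (at z)"
        by (intro DERIV_cmult DERIV_diff dz DERIV_const)
      then have d1: "((\<lambda>z. - \<i> * (g z - g 0)) has_field_derivative - \<i> * f z) (at z)" by simp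
      have eqU: "- \<i> * (g x - g 0) = h x" if x: "x \<in> U" for x
      proof -
        have "h x = angular_primitive w x" using hA x by (simp add: U_def D_def)
        also have "\<dots> = - \<i> * (g x - g 0)" using AP x by (simp add: U_def)
        finally show ?thesis by simp
      qed
      have "(h has_field_derivative - \<i> * f z) (at z)"
        by (rule has_field_derivative_transform_within_open[OF d1 oU zU]) (rule eqU)
      moreover have "(h has_field_derivative deriv h z) (at z)"
      proof (rule holomorphic_derivI[OF hh])
        show "z \<in> ball z1 r" using z by simp
      qed simp
      ultimately have dh: "deriv h z = - \<i> * f z" by (rule DERIV_unique[rotated])
      show "w 0 + \<i> * z * deriv h z = w z"
      proof (cases "z = 0")
        case True then show ?thesis by simp
      next
        case False
        then have "f z = (w z - w 0) / z" by (simp add: f_def ang_integrand_def)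
        then show ?thesis using False dh by (simp add: field_simps)
      qed
    qed
    with sing show False by blast
  qed
  have CI: "(ang_integrand w has_contour_integral (\<i> * L)) \<gamma>"
    if vp: "valid_path \<gamma>" and ar: "arc \<gamma>" and ps: "pathstart \<gamma> = 0" and pf: "pathfinish \<gamma> = z1"
      and pim: "path_image \<gamma> - {z1} \<subseteq> ball 0 1" for \<gamma>
  proof -
    define G where "G z = (if z \<in> D then g z else lg)" for z
    have GD: "(G has_field_derivative f x) (at x)" if "x \<in> D" for x
      by (rule has_field_derivative_transform_within_open[OF g[OF that] oD that]) (simp add: G_def)
    have inD: "\<gamma> t \<in> D" if t: "t \<in> {0<..<1}" for t
    proof -
      have "\<gamma> t \<noteq> \<gamma> 1" using ar t unfolding arc_def inj_on_def by force
      moreover have "\<gamma> t \<in> path_image \<gamma>" using t by (auto simp: path_image_def)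
      ultimately have "\<gamma> t \<in> path_image \<gamma> - {z1}" using pf by (auto simp: pathfinish_def)
      then show ?thesis using pim by (auto simp: D_def)
    qed
    have cont: "continuous_on (path_image \<gamma>) G"
      unfolding continuous_on_def
    proof
      fix z assume z: "z \<in> path_image \<gamma>"
      show "(G \<longlongrightarrow> G z) (at z within path_image \<gamma>)"
      proof (cases "z = z1")
        case True
        have "(G \<longlongrightarrow> lg) (at z1 within D)"
          by (rule Lim_transform_eventually[OF lg]) (auto simp: eventually_at_filter G_def)
        then have "(G \<longlongrightarrow> lg) (at z1 within (path_image \<gamma> - {z1}))"
          by (rule tendsto_within_subset) (use pim in \<open>simp add: D_def\<close>)
        moreover have "at z1 within path_image \<gamma> = at z1 within (path_image \<gamma> - {z1})"
          by (rule at_within_nhd[of z1 UNIV]) auto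
        ultimately have "(G \<longlongrightarrow> lg) (at z1 within path_image \<gamma>)" by simp
        then show ?thesis using True z1D by (simp add: G_def)
      next
        case False
        then have "z \<in> D" using z pim by (auto simp: D_def)
        then have "isCont G z" using GD DERIV_isCont by blast
        then show ?thesis unfolding isCont_def by (rule tendsto_mono[rotated]) (rule at_le, simp)
      qed
    qed
    have "(f has_contour_integral (G (pathfinish \<gamma>) - G (pathstart \<gamma>))) \<gamma>"
      by (rule prim_lemma[OF GD vp inD cont])
    moreover have "G (pathfinish \<gamma>) - G (pathstart \<gamma>) = \<i> * L"
      using pf ps z1D D0 by (simp add: G_def L_def algebra_simps)
    ultimately show ?thesis by (simp add: f_def)
  qed
  show ?thesis
    using APL nab CI
    by (auto simp: soft_singularity_def singular_point_def D_def)
qed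

end
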